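(* Let $s\in[\tfrac12,1)$, $m\ge1$, and let $\alpha_s,\beta_s>0$ be constants depending only on $s$. Define $\Xi_s$ on $\{(q_1,\dots,q_m)\}$ by \[ \Xi_s=\sum_{i=1}^m\Big(\alpha_sU(2q_i)+\beta_s\varepsilon^{2s-1}|2q_i|^{2s-1}\Big)+\sum_{i\neq j}\Big(\alpha_sU(q_i-q_j)+\beta_s\varepsilon^{2s-1}|q_i-q_j|^{2s-1}\Big)+\sum_{i\neq j}\Big(\alpha_sU(q_i+q_j)+\beta_s\varepsilon^{2s-1}|q_i+q_j|^{2s-1}\Big) \] for $s\in(\frac12,1)$, and \[ \Xi_{\frac12}=\sum_{i=1}^m\Big(\alpha_{\frac12}U(2q_i)+\tfrac{\beta_{\frac12}}{\log\frac1\varepsilon}\log|2q_i|\Big)+\sum_{i\neq j}\Big(\alpha_{\frac12}U(q_i-q_j)+\tfrac{\beta_{\frac12}}{\log\frac1\varepsilon}\log|q_i-q_j|\Big)+\sum_{i\neq j}\Big(\alpha_{\frac12}U(q_i+q_j)+\tfrac{\beta_{\frac12}}{\log\frac1\varepsilon}\log|q_i+q_j|\Big) \] for $s=\frac12$ (sums over ordered pairs $i\ne j$). Then, provided $\eta>0$ is sufficiently small (and $\varepsilon>0$ is sufficiently small), $\Xi_s$ admits a global minimum point over $\overline{Q_{s,\eta}}$ lying in the interior of $Q_{s,\eta}$.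
   Context: $U$ is the unique positive even solution of $(-\Delta)^sU+U-U^2=0$ in $\mathbb{R}$ vanishing at infinity ($(-\Delta)^s$ the fractional Laplacian with Fourier symbol $|\xi|^{2s}$); it satisfies $U(x)=\mathfrak b_s|x|^{-1-2s}(1+o(1))$ as $|x|\to\infty$ for some $\mathfrak b_s>0$. For $\eta>0$, $Q_{s,\eta}$ is the set of $(q_1,\dots,q_m)$ with $\frac1\eta\ell_\varepsilon>q_i>\eta\ell_\varepsilon$ for all $i$ and $|q_i-q_j|>\eta\ell_\varepsilon$ for $i\ne j$, where $\ell_\varepsilon=\varepsilon^{\frac{1-2s}{4s}}$ if $s\in(\frac12,1)$ and $\ell_\varepsilon=(\log\frac1\varepsilon)^{1/2}$ if $s=\frac12$. *)

theory Defs
  imports "HOL-Analysis.Analysis"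
begin

text \<open>Normalising constant of the one-dimensional fractional Laplacian with
  Fourier symbol |xi|^(2s):  C_s = s 4^s Gamma(1/2+s) / (sqrt pi Gamma(1-s)).\<close>
definition frac_const :: "real \<Rightarrow> real" where
  "frac_const s = s * 4 powr s * Gamma (1/2 + s) / (sqrt pi * Gamma (1 - s))"

definition frac_lap_at :: "real \<Rightarrow> (real \<Rightarrow> real) \<Rightarrow> real \<Rightarrow> real \<Rightarrow> bool" where
  "frac_lap_at s u x L \<longleftrightarrow>
     (\<forall>\<delta>>0. (\<lambda>y. (u x - u y) / (\<bar>x - y\<bar>) powr (1 + 2* s)) integrable_on {y. \<delta> \<le> \<bar>x - y\<bar>}) \<and>
     ((\<lambda>\<delta>. frac_const s * integral {y. \<delta> \<le> \<bar>x - y\<bar>} (\<lambda>y. (u x - u y) / (\<bar>x - y\<bar>) powr (1 + 2* s)))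
        \<longlongrightarrow> L) (at_right 0)"

definition is_ground_state :: "real \<Rightarrow> (real \<Rightarrow> real) \<Rightarrow> bool" where
  "is_ground_state s U \<longleftrightarrow>
     continuous_on UNIV U \<and> (\<forall>x. 0 < U x) \<and> (\<forall>x. U (-x) = U x) \<and>
     (U \<longlongrightarrow> 0) at_infinity \<and>
     (\<forall>x. frac_lap_at s U x (U x ^ 2 - U x))"

definition ell :: "real \<Rightarrow> real \<Rightarrow> real" where
  "ell s \<epsilon> = (if s = 1/2 then sqrt (ln (1/\<epsilon>)) else \<epsilon> powr ((1 - 2* s) / (4* s)))"

definition Qset :: "real \<Rightarrow> real \<Rightarrow> real \<Rightarrow> (real^'m) set" where
  "Qset s \<eta> \<epsilon> = {q. (\<forall>i. \<eta> * ell s \<epsilon> < q$i \<and> q$i < ell s \<epsilon> / \<eta>) \<and>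
                    (\<forall>i j. i \<noteq> j \<longrightarrow> \<eta> * ell s \<epsilon> < \<bar>q$i - q$j\<bar>)}"

definition Xi_term :: "real \<Rightarrow> real \<Rightarrow> real \<Rightarrow> (real \<Rightarrow> real) \<Rightarrow> real \<Rightarrow> real \<Rightarrow> real" where
  "Xi_term s \<alpha> \<beta> U \<epsilon> x =
     \<alpha> * U x + (if s = 1/2 then \<beta> / ln (1/\<epsilon>) * ln \<bar>x\<bar>
                 else \<beta> * \<epsilon> powr (2* s - 1) * (\<bar>x\<bar>) powr (2* s - 1))"

definition Xi :: "real \<Rightarrow> real \<Rightarrow> real \<Rightarrow> (real \<Rightarrow> real) \<Rightarrow> real \<Rightarrow> real^'m \<Rightarrow> real" where
  "Xi s \<alpha> \<beta> U \<epsilon> q =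
     (\<Sum>i\<in>UNIV. Xi_term s \<alpha> \<beta> U \<epsilon> (2 * q$i))
     + (\<Sum>i\<in>UNIV. \<Sum>j\<in>UNIV - {i}. Xi_term s \<alpha> \<beta> U \<epsilon> (q$i - q$j))
     + (\<Sum>i\<in>UNIV. \<Sum>j\<in>UNIV - {i}. Xi_term s \<alpha> \<beta> U \<epsilon> (q$i + q$j))"

end

theory Submission imports Defs begin

definition Gf :: "real \<Rightarrow> real \<Rightarrow> real" where
  "Gf s t = (if s = 1/2 then ln t else t powr (2* s-1))"
definition shf :: "real \<Rightarrow> real \<Rightarrow> real \<Rightarrow> real" where
  "shf s \<beta> \<epsilon> = (if s = 1/2 then \<beta> / ln (1/\<epsilon>) * ln (ell s \<epsilon>) else 0)"

lemma ell_pos: assumes "1/2 \<le> s" "s < 1" "0 < \<epsilon>" "\<epsilon> < 1" shows "0 < ell s \<epsilon>"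
  using assms by (auto simp: ell_def)

lemma term_eq:
  assumes s: "1/2 \<le> s" "s < 1" and e: "0 < \<epsilon>" "\<epsilon> < 1" and x: "x \<noteq> 0"
  shows "Xi_term s \<alpha> \<beta> U \<epsilon> x = \<alpha> * U x + shf s \<beta> \<epsilon>
           + ell s \<epsilon> powr (-1-2 * s) * \<beta> * Gf s (\<bar>x\<bar> / ell s \<epsilon>)"
proof -
  define l where "l = ell s \<epsilon>"
  have l: "0 < l" using ell_pos[OF s e] by (simp add: l_def)
  have t: "0 < \<bar>x\<bar>/l" using l x by simp
  show ?thesis
  proof (cases "s = 1/2")
    case True
    have L: "ln (1/\<epsilon>) = l^2" using e True by (simp add: l_def ell_def)
    have lnx: "ln \<bar>x\<bar> = ln l + ln (\<bar>x\<bar>/l)" using l x by (simp add: ln_div)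
    have e2: "-1 - 2 * s = (-2::real)" using True by simp
    have "l powr (-1 - 2 * s) = l powr (-2)" by (simp only: e2)
    also have "\<dots> = inverse (l powr 2)" by (rule powr_minus)
    also have "l powr 2 = l^2" using l by simp
    finally have lp: "l powr (-1 - 2 * s) = 1 / l^2" by (simp add: divide_inverse)
    have sh: "shf s \<beta> \<epsilon> = \<beta> / l^2 * ln l" using True L by (simp add: shf_def l_def)
    have G: "Gf s (\<bar>x\<bar>/l) = ln (\<bar>x\<bar>/l)" using True by (simp add: Gf_def)
    have X: "Xi_term s \<alpha> \<beta> U \<epsilon> x = \<alpha> * U x + \<beta> / ln (1/\<epsilon>) * ln \<bar>x\<bar>"
      using True by (simp add: Xi_term_def)
    have "Xi_term s \<alpha> \<beta> U \<epsilon> x = \<alpha> * U x + \<beta> / l^2 * (ln l + ln (\<bar>x\<bar>/l))"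
      unfolding X L lnx ..
    also have "\<dots> = \<alpha> * U x + \<beta> / l^2 * ln l + 1 / l^2 * \<beta> * ln (\<bar>x\<bar>/l)"
      by (simp add: distrib_left)
    finally show ?thesis unfolding l_def[symmetric] sh G lp .
  next
    case False
    define a where "a = (1 - 2 * s)/(4 * s)"
    have la: "l = \<epsilon> powr a" using False by (simp add: l_def ell_def a_def)
    have p1: "\<bar>x\<bar> powr (2 * s-1) = l powr (2 * s-1) * (\<bar>x\<bar>/l) powr (2 * s-1)"
      using powr_mult[of l "\<bar>x\<bar>/l" "2 * s-1"] l t by simp
    have p2: "\<epsilon> powr (2 * s-1) * l powr (2 * s-1) = l powr (-1-2 * s)"
    proof -
      have eq: "(2 * s-1) + a*(2 * s-1) = a * (-1-2 * s)" using s by (simp add: a_def field_simps)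
      have "\<epsilon> powr (2 * s-1) * l powr (2 * s-1) = \<epsilon> powr (2 * s-1) * \<epsilon> powr (a*(2 * s-1))"
        by (simp only: la powr_powr)
      also have "\<dots> = \<epsilon> powr ((2 * s-1) + a*(2 * s-1))" by (rule powr_add[symmetric])
      also have "\<dots> = \<epsilon> powr (a*(-1-2 * s))" by (simp only: eq)
      also have "\<dots> = l powr (-1-2 * s)" by (simp only: la powr_powr)
      finally show ?thesis .
    qed
    have sh: "shf s \<beta> \<epsilon> = 0" using False by (simp add: shf_def)
    have G: "Gf s (\<bar>x\<bar>/l) = (\<bar>x\<bar>/l) powr (2 * s-1)" using False by (simp add: Gf_def)
    have X: "Xi_term s \<alpha> \<beta> U \<epsilon> x = \<alpha> * U x + \<beta> * (\<epsilon> powr (2 * s - 1) * \<bar>x\<bar> powr (2 * s - 1))"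
      using False by (simp add: Xi_term_def mult.assoc)
    have "Xi_term s \<alpha> \<beta> U \<epsilon> x = \<alpha> * U x + \<beta> * ((\<epsilon> powr (2 * s-1) * l powr (2 * s-1)) * (\<bar>x\<bar>/l) powr (2 * s-1))"
      unfolding X p1 by (simp only: mult.assoc)
    also have "\<dots> = \<alpha> * U x + l powr (-1-2 * s) * \<beta> * (\<bar>x\<bar>/l) powr (2 * s-1)"
      unfolding p2 by (simp only: mult_ac)
    finally show ?thesis unfolding l_def[symmetric] sh G by simp
  qed
qed


definition Sm :: "(real \<Rightarrow> real) \<Rightarrow> real^'m \<Rightarrow> real" where
  "Sm F q = (\<Sum>i\<in>UNIV. F (2 * q$i)) + (\<Sum>i\<in>UNIV. \<Sum>j\<in>UNIV - {i}. F (q$i - q$j))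
           + (\<Sum>i\<in>UNIV. \<Sum>j\<in>UNIV - {i}. F (q$i + q$j))"

definition slots :: "real^'m \<Rightarrow> (real \<Rightarrow> bool) \<Rightarrow> bool" where
  "slots q P \<longleftrightarrow> (\<forall>i. P (2 * q$i)) \<and> (\<forall>i j. i \<noteq> j \<longrightarrow> P (q$i - q$j) \<and> P (q$i + q$j))"

lemma Xi_Sm: "Xi s \<alpha> \<beta> U \<epsilon> q = Sm (Xi_term s \<alpha> \<beta> U \<epsilon>) q"
  by (simp add: Xi_def Sm_def)

lemma Sm_mono: assumes "slots q (\<lambda>x. F x \<le> H x)" shows "Sm F q \<le> Sm H q"
  unfolding Sm_def using assms unfolding slots_def
  by (intro add_mono sum_mono) auto

lemma Sm_add: "Sm (\<lambda>x. F x + H x) q = Sm F q + Sm H q"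
  by (simp add: Sm_def sum.distrib)

lemma Sm_cmult: "Sm (\<lambda>x. c * F x) q = c * Sm F q"
  by (simp add: Sm_def sum_distrib_left distrib_left)

lemma Sm_const: "Sm (\<lambda>x. c) (q::real^'m) = Sm (\<lambda>x. c) (p::real^'m)"
  by (simp add: Sm_def)

lemma Sm_single1: assumes "slots q (\<lambda>x. 0 \<le> F x)" shows "F (2 * q$i) \<le> Sm F q"
proof -
  have a: "F (2 * q$i) \<le> (\<Sum>i\<in>UNIV. F (2 * q$i))"
    using assms by (intro member_le_sum) (auto simp: slots_def)
  have b: "0 \<le> (\<Sum>i\<in>UNIV. \<Sum>j\<in>UNIV - {i}. F (q$i - q$j))"
    using assms by (intro sum_nonneg) (auto simp: slots_def)
  have c: "0 \<le> (\<Sum>i\<in>UNIV. \<Sum>j\<in>UNIV - {i}. F (q$i + q$j))"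
    using assms by (intro sum_nonneg) (auto simp: slots_def)
  show ?thesis using a b c by (simp add: Sm_def)
qed

lemma Sm_single2: assumes "slots q (\<lambda>x. 0 \<le> F x)" "i \<noteq> j" shows "F (q$i - q$j) \<le> Sm F q"
proof -
  have a: "0 \<le> (\<Sum>i\<in>UNIV. F (2 * q$i))"
    using assms by (intro sum_nonneg) (auto simp: slots_def)
  have b1: "F (q$i - q$j) \<le> (\<Sum>j\<in>UNIV - {i}. F (q$i - q$j))"
    using assms by (intro member_le_sum) (auto simp: slots_def)
  have b2: "(\<Sum>j\<in>UNIV - {i}. F (q$i - q$j)) \<le> (\<Sum>i\<in>UNIV. \<Sum>j\<in>UNIV - {i}. F (q$i - q$j))"
    using assms by (intro member_le_sum sum_nonneg) (auto simp: slots_def)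
  have c: "0 \<le> (\<Sum>i\<in>UNIV. \<Sum>j\<in>UNIV - {i}. F (q$i + q$j))"
    using assms by (intro sum_nonneg) (auto simp: slots_def)
  show ?thesis using a b1 b2 c by (simp add: Sm_def)
qed

lemma slots_mono: "slots q P \<Longrightarrow> (\<And>x. P x \<Longrightarrow> Q x) \<Longrightarrow> slots q Q"
  by (auto simp: slots_def)


lemma g_lower:
  assumes s: "1/2 \<le> s" "s < 1" and a: "0 < a" and \<beta>: "0 < \<beta>" and t: "0 < t"
  shows "-(\<beta>^2/a) \<le> a/4 * t powr (-1-2 * s) + \<beta> * Gf s t"
proof (cases "s = 1/2")
  case True
  define u where "u = 1/t"
  have u: "0 < u" using t by (simp add: u_def)
  have e2: "-1 - 2 * s = (-2::real)" using True by simp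
  have "t powr (-1-2 * s) = t powr (-2)" by (simp only: e2)
  also have "\<dots> = inverse (t powr 2)" by (rule powr_minus)
  also have "t powr 2 = t^2" using t by simp
  finally have tp: "t powr (-1-2 * s) = u^2" by (simp add: u_def power_inverse divide_inverse)
  have "ln (1/t) \<le> 1/t - 1" using t by (intro ln_le_minus_one) simp
  then have lnt: "ln t \<ge> - u" using t by (simp add: u_def ln_div)
  have sq: "a * (a/4*u^2 - \<beta>*u + \<beta>^2/a) = (a*u/2 - \<beta>)^2"
    using a by (simp add: field_simps power2_eq_square)
  have "0 \<le> a/4*u^2 - \<beta>*u + \<beta>^2/a"
    using sq a by (metis zero_le_mult_iff zero_le_power2 not_le order_less_imp_le)
  moreover have "\<beta> * (- u) \<le> \<beta> * ln t" using lnt \<beta> by (intro mult_left_mono) auto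
  ultimately show ?thesis using True tp by (simp add: Gf_def)
next
  case False
  have h1: "0 \<le> a/4 * t powr (-1-2 * s)" using a by simp
  have h2: "0 \<le> \<beta> * Gf s t" using \<beta> False by (simp add: Gf_def)
  have h3: "0 \<le> \<beta>^2/a" using a by simp
  show ?thesis using h1 h2 h3 by linarith
qed

lemma small_t:
  fixes s t :: real
  assumes s: "1/2 \<le> s" and t: "0 < t" "t \<le> 1"
  shows "1/t \<le> t powr (-1-2 * s)"
proof -
  have "t powr (-1-2 * s) \<ge> t powr (-1)"
    using s t by (intro powr_mono') auto
  then show ?thesis using t by (simp add: powr_minus divide_inverse)
qed

lemma G_large:
  assumes s: "1/2 \<le> s" "s < 1" and t: "1 \<le> t"
  shows "(if s = 1/2 then 1 else 2 * s - 1) * ln t \<le> Gf s t"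
proof (cases "s = 1/2")
  case True then show ?thesis by (simp add: Gf_def)
next
  case False
  have "(2 * s - 1) * ln t \<le> exp ((2 * s - 1) * ln t)"
    using exp_ge_add_one_self[of "(2 * s - 1) * ln t"] by linarith
  moreover have "exp ((2 * s - 1) * ln t) = t powr (2 * s - 1)" using t by (simp add: powr_def)
  ultimately have "(2 * s - 1) * ln t \<le> t powr (2 * s - 1)" by simp
  then show ?thesis using False by (simp add: Gf_def)
qed


lemma U_bounds:
  fixes U :: "real \<Rightarrow> real"
  assumes b: "0 < b" and lim: "((\<lambda>x. U x / (b * (\<bar>x\<bar>) powr (-1 - 2 * s))) \<longlongrightarrow> 1) at_infinity"
  shows "\<exists>R>0. \<forall>x. R \<le> \<bar>x\<bar> \<longrightarrow> b/2 * \<bar>x\<bar> powr (-1-2 * s) \<le> U x \<and> U x \<le> 2*b*\<bar>x\<bar> powr (-1-2 * s)"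
proof -
  have "\<forall>\<^sub>F x in at_infinity. dist (U x / (b * (\<bar>x\<bar>) powr (-1 - 2 * s))) 1 < 1/2"
    using tendstoD[OF lim, of "1/2"] by simp
  then obtain R where R: "\<And>x. R \<le> norm x \<Longrightarrow> dist (U x / (b * (\<bar>x\<bar>) powr (-1 - 2 * s))) 1 < 1/2"
    unfolding eventually_at_infinity by blast
  show ?thesis
  proof (intro exI[of _ "max R 1"] conjI allI impI)
    fix x :: real assume x: "max R 1 \<le> \<bar>x\<bar>"
    define d where "d = b * \<bar>x\<bar> powr (-1 - 2 * s)"
    have xp: "0 < \<bar>x\<bar>" using x by linarith
    have d: "0 < d" unfolding d_def using b xp by (intro mult_pos_pos) auto
    have "\<bar>U x / d - 1\<bar> < 1/2" using R[of x] x by (simp add: d_def dist_real_def)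
    then have "1/2 < U x / d" "U x / d < 3/2" by arith+
    then have "d/2 < U x" "U x < 3/2 * d" using d by (simp_all add: field_simps)
    then show "b/2 * \<bar>x\<bar> powr (-1-2 * s) \<le> U x" "U x \<le> 2*b*\<bar>x\<bar> powr (-1-2 * s)"
      using d by (simp_all add: d_def)
  qed simp
qed

lemma slot_bounds:
  assumes s: "1/2 \<le> s" "s < 1" and e: "0 < \<epsilon>" "\<epsilon> < 1" and \<alpha>: "0 < \<alpha>" and x: "x \<noteq> 0"
    and U1: "b/2 * \<bar>x\<bar> powr (-1-2 * s) \<le> U x" and U2: "U x \<le> 2*b*\<bar>x\<bar> powr (-1-2 * s)"
  shows "shf s \<beta> \<epsilon> + ell s \<epsilon> powr (-1-2 * s) * (\<alpha>*b/2 * (\<bar>x\<bar>/ell s \<epsilon>) powr (-1-2 * s)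
            + \<beta> * Gf s (\<bar>x\<bar>/ell s \<epsilon>)) \<le> Xi_term s \<alpha> \<beta> U \<epsilon> x"
    and "Xi_term s \<alpha> \<beta> U \<epsilon> x \<le> shf s \<beta> \<epsilon> + ell s \<epsilon> powr (-1-2 * s) * (2*\<alpha>*b * (\<bar>x\<bar>/ell s \<epsilon>) powr (-1-2 * s)
            + \<beta> * Gf s (\<bar>x\<bar>/ell s \<epsilon>))"
proof -
  define l where "l = ell s \<epsilon>"
  have l: "0 < l" using ell_pos[OF s e] by (simp add: l_def)
  have xl: "\<bar>x\<bar> = l * (\<bar>x\<bar>/l)" using l by simp
  have t: "0 < \<bar>x\<bar>/l" using l x by simp
  have px: "\<bar>x\<bar> powr (-1-2 * s) = l powr (-1-2 * s) * (\<bar>x\<bar>/l) powr (-1-2 * s)"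
    using powr_mult[of l "\<bar>x\<bar>/l" "-1-2 * s"] l t by simp
  have eq: "Xi_term s \<alpha> \<beta> U \<epsilon> x = \<alpha> * U x + shf s \<beta> \<epsilon> + l powr (-1-2 * s) * \<beta> * Gf s (\<bar>x\<bar>/l)"
    using term_eq[OF s e x] by (simp add: l_def)
  have "\<alpha> * (b/2 * \<bar>x\<bar> powr (-1-2 * s)) \<le> \<alpha> * U x" using U1 \<alpha> by simp
  moreover have "\<alpha> * U x \<le> \<alpha> * (2*b*\<bar>x\<bar> powr (-1-2 * s))" using U2 \<alpha> by simp
  ultimately show "shf s \<beta> \<epsilon> + ell s \<epsilon> powr (-1-2 * s) * (\<alpha>*b/2 * (\<bar>x\<bar>/ell s \<epsilon>) powr (-1-2 * s)
            + \<beta> * Gf s (\<bar>x\<bar>/ell s \<epsilon>)) \<le> Xi_term s \<alpha> \<beta> U \<epsilon> x"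
    and "Xi_term s \<alpha> \<beta> U \<epsilon> x \<le> shf s \<beta> \<epsilon> + ell s \<epsilon> powr (-1-2 * s) * (2*\<alpha>*b * (\<bar>x\<bar>/ell s \<epsilon>) powr (-1-2 * s)
            + \<beta> * Gf s (\<bar>x\<bar>/ell s \<epsilon>))"
    unfolding eq l_def[symmetric] px by (simp_all add: algebra_simps)
qed


lemma ell_large:
  fixes s M :: real
  assumes s: "1/2 \<le> s" "s < 1"
  shows "\<exists>e0>0. \<forall>\<epsilon>. 0 < \<epsilon> \<and> \<epsilon> < e0 \<longrightarrow> M \<le> ell s \<epsilon>"
proof (cases "s = 1/2")
  case True
  show ?thesis
  proof (intro exI[of _ "exp (-(M^2))"] conjI allI impI)
    fix \<epsilon> :: real assume e: "0 < \<epsilon> \<and> \<epsilon> < exp (-(M^2))"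
    then have "ln \<epsilon> < -(M^2)" by (metis ln_exp ln_less_cancel_iff exp_gt_zero)
    then have "M^2 < ln (1/\<epsilon>)" using e by (simp add: ln_div)
    then have "sqrt (M^2) \<le> sqrt (ln (1/\<epsilon>))" by (intro real_sqrt_le_mono) simp
    then show "M \<le> ell s \<epsilon>" using True by (simp add: ell_def)
  qed simp
next
  case False
  define a where "a = (1 - 2 * s)/(4 * s)"
  have a: "a < 0" using s False by (simp add: a_def divide_neg_pos)
  define e0 where "e0 = (\<bar>M\<bar>+1) powr (1/a)"
  have e0: "0 < e0" by (simp add: e0_def)
  have e0a: "e0 powr a = \<bar>M\<bar>+1" using a by (simp add: e0_def powr_powr)
  show ?thesis
  proof (intro exI[of _ e0] conjI allI impI e0)
    fix \<epsilon> :: real assume e: "0 < \<epsilon> \<and> \<epsilon> < e0"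
    then have "e0 powr a < \<epsilon> powr a" using a by (intro powr_less_mono2_neg) auto
    then show "M \<le> ell s \<epsilon>" using False e0a by (simp add: ell_def a_def)
  qed
qed


lemma cont_term:
  assumes g: "isCont g p" and gp: "g p \<noteq> 0" and U: "continuous_on UNIV U"
  shows "isCont (\<lambda>q. Xi_term s \<alpha> \<beta> U \<epsilon> (g q)) p"
proof -
  have "isCont U (g p)" using U by (simp add: continuous_on_eq_continuous_at)
  then have u: "isCont (\<lambda>q. U (g q)) p" using g by (rule isCont_o2[rotated])
  have a: "isCont (\<lambda>q. \<bar>g q\<bar>) p" using g by (intro continuous_intros)
  have ap: "\<bar>g p\<bar> \<noteq> 0" using gp by simp
  have l1: "isCont (\<lambda>q. ln \<bar>g q\<bar>) p" using a ap g by (intro continuous_intros) auto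
  have l2: "isCont (\<lambda>q. \<bar>g q\<bar> powr (2 * s - 1)) p" using a ap g by (intro continuous_intros) auto
  have l3: "isCont (\<lambda>q. \<alpha> * U (g q)) p" using u by (intro continuous_intros)
  show ?thesis
  proof (cases "s = 1/2")
    case True
    have "isCont (\<lambda>q. \<alpha> * U (g q) + \<beta> / ln (1/\<epsilon>) * ln \<bar>g q\<bar>) p"
      by (rule continuous_add[OF l3 continuous_mult[OF continuous_const l1]])
    then show ?thesis using True by (simp add: Xi_term_def)
  next
    case False
    have "isCont (\<lambda>q. \<alpha> * U (g q) + \<beta> * \<epsilon> powr (2 * s - 1) * \<bar>g q\<bar> powr (2 * s - 1)) p"
      by (rule continuous_add[OF l3 continuous_mult[OF continuous_const l2]])
    then show ?thesis using False by (simp add: Xi_term_def)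
  qed
qed

lemma Xi_isCont:
  fixes p :: "real^'m"
  assumes "slots p (\<lambda>x. x \<noteq> 0)" and U: "continuous_on UNIV U"
  shows "isCont (Xi s \<alpha> \<beta> U \<epsilon>) p"
  unfolding Xi_def using assms
  by (intro continuous_intros cont_term) (auto simp: slots_def)

lemma Sm_scale:
  fixes y :: "real^'m"
  assumes c: "0 < c"
  shows "Sm (\<lambda>x. F (\<bar>x\<bar>/c)) (\<chi> i. c * y$i) = Sm (\<lambda>z. F \<bar>z\<bar>) y"
proof -
  have e1: "\<bar>2 * (c * w)\<bar> / c = \<bar>2 * w\<bar>" for w using c by (simp add: abs_mult)
  have e2: "\<bar>c * w - c * v\<bar> / c = \<bar>w - v\<bar>" for w v
    using c by (simp add: abs_mult flip: right_diff_distrib)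
  have e3: "\<bar>c * w + c * v\<bar> / c = \<bar>w + v\<bar>" for w v
    using c by (simp add: abs_mult flip: distrib_left)
  show ?thesis unfolding Sm_def by (simp only: vec_lambda_beta e1 e2 e3)
qed


theorem lemma8p1:
  fixes s \<alpha> \<beta> :: real and U :: "real \<Rightarrow> real"
  assumes s: "1/2 \<le> s" "s < 1"
    and \<alpha>: "0 < \<alpha>" and \<beta>: "0 < \<beta>"
    and U: "is_ground_state s U"
    and U_asym: "\<exists>b>0. ((\<lambda>x. U x / (b * (\<bar>x\<bar>) powr (-1 - 2* s))) \<longlongrightarrow> 1) at_infinity"
  shows "\<exists>\<eta>0>0. \<forall>\<eta>. 0 < \<eta> \<and> \<eta> < \<eta>0 \<longrightarrow>
           (\<exists>\<epsilon>0>0. \<forall>\<epsilon>. 0 < \<epsilon> \<and> \<epsilon> < \<epsilon>0 \<longrightarrow>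
              (\<exists>q \<in> (Qset s \<eta> \<epsilon> :: (real^'m) set).
                 \<forall>p :: real^'m \<in> closure (Qset s \<eta> \<epsilon>). Xi s \<alpha> \<beta> U \<epsilon> q \<le> Xi s \<alpha> \<beta> U \<epsilon> p))"
proof -
  obtain b where b: "0 < b" and lim: "((\<lambda>x. U x / (b * (\<bar>x\<bar>) powr (-1 - 2 * s))) \<longlongrightarrow> 1) at_infinity"
    using U_asym by blast
  obtain R where R: "0 < R" and UR: "\<And>x. R \<le> \<bar>x\<bar> \<Longrightarrow> b/2 * \<bar>x\<bar> powr (-1-2 * s) \<le> U x \<and> U x \<le> 2*b*\<bar>x\<bar> powr (-1-2 * s)"
    using U_bounds[OF b lim] by blast
  have Ucont: "continuous_on UNIV U" using U by (simp add: is_ground_state_def)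
  define n where "n = CARD('m)"
  have n1: "1 \<le> n" unfolding n_def by (simp add: Suc_le_eq)
  obtain f :: "'m \<Rightarrow> nat" where f: "bij_betw f UNIV {0..<n}"
    using ex_bij_betw_finite_nat[of "UNIV :: 'm set"] by (auto simp: n_def)
  have finj: "f i \<noteq> f j" if "i \<noteq> j" for i j using f that by (auto simp: bij_betw_def inj_on_def)
  have fn: "f i < n" for i using f by (auto simp: bij_betw_def)
  define y0 :: "real^'m" where "y0 = (\<chi> i. 1 + real (f i))"
  define a where "a = \<alpha> * b"
  have a: "0 < a" using \<alpha> b by (simp add: a_def)
  define c1 where "c1 = -(\<beta>^2/a)"
  define \<gamma> :: real where "\<gamma> = (if s = 1/2 then 1 else 2 * s - 1)"
  have \<gamma>: "0 < \<gamma>" using s by (auto simp: \<gamma>_def)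
  define ghi where "ghi t = 2*\<alpha>*b * t powr (-1-2 * s) + \<beta> * Gf s t" for t
  define \<phi> where "\<phi> t = \<alpha>*b/2 * t powr (-1-2 * s) + \<beta> * Gf s t - c1" for t
  define A where "A = Sm (\<lambda>z. ghi \<bar>z\<bar>) y0"
  define K where "K = A - Sm (\<lambda>_. c1) y0"
  define \<eta>0 where "\<eta>0 = min (min (1/(real n+2)) (a/(8*(\<bar>K\<bar>+1)))) (exp (-(\<bar>K + c1\<bar>/(\<beta>*\<gamma>))))"
  have \<phi>1: "a/4 * t powr (-1-2 * s) \<le> \<phi> t" if "0 < t" for t
    using g_lower[OF s a \<beta> that] by (simp add: \<phi>_def c1_def a_def)
  have \<phi>0: "0 \<le> \<phi> t" if "0 < t" for t
  proof -
    have "0 \<le> a/4 * t powr (-1-2 * s)" using a by simp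
    then show ?thesis using \<phi>1[OF that] by linarith
  qed
  have \<phi>2: "\<beta> * Gf s t - c1 \<le> \<phi> t" for t
    using \<alpha> b by (simp add: \<phi>_def)
  show ?thesis
  proof (rule exI[of _ \<eta>0], intro conjI allI impI)
    show "0 < \<eta>0" unfolding \<eta>0_def using a by simp
    fix \<eta> :: real assume \<eta>: "0 < \<eta> \<and> \<eta> < \<eta>0"
    have \<eta>n: "\<eta> < 1/(real n+2)" and \<eta>K: "\<eta> < a/(8*(\<bar>K\<bar>+1))"
      and \<eta>e: "\<eta> < exp (-(\<bar>K + c1\<bar>/(\<beta>*\<gamma>)))" using \<eta> by (simp_all add: \<eta>0_def)
    have \<eta>pos: "0 < \<eta>" using \<eta> by simp
    have \<eta>half: "2 * \<eta> \<le> 1"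
    proof -
      have "1/(real n+2) \<le> 1/3" using n1 by (simp add: field_simps)
      then show ?thesis using \<eta>n by linarith
    qed
    have big1: "K < a/(8*\<eta>)"
    proof -
      have "8*\<eta>*(\<bar>K\<bar>+1) < a" using \<eta>K by (simp add: field_simps)
      then have "\<bar>K\<bar>+1 < a/(8*\<eta>)" using \<eta>pos by (simp add: field_simps)
      then show ?thesis by linarith
    qed
    have big2: "K < \<beta> * \<gamma> * ln (2/\<eta>) - c1"
    proof -
      have "ln \<eta> < -(\<bar>K + c1\<bar>/(\<beta>*\<gamma>))" using \<eta>e \<eta>pos
        by (metis ln_exp ln_less_cancel_iff exp_gt_zero)
      moreover have "ln (2/\<eta>) = ln 2 - ln \<eta>" using \<eta>pos by (simp add: ln_div)
      moreover have "0 < ln (2::real)" by simp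
      ultimately have "\<bar>K + c1\<bar>/(\<beta>*\<gamma>) < ln (2/\<eta>)" by linarith
      then have "\<bar>K + c1\<bar> < \<beta>*\<gamma> * ln (2/\<eta>)" using \<beta> \<gamma> by (simp add: field_simps)
      then show ?thesis by linarith
    qed
    obtain e0 where e0: "0 < e0" and e0l: "\<And>\<epsilon>. 0 < \<epsilon> \<and> \<epsilon> < e0 \<Longrightarrow> R/\<eta> + 1 \<le> ell s \<epsilon>"
      using ell_large[OF s, of "R/\<eta> + 1"] by blast
    show "\<exists>\<epsilon>0>0. \<forall>\<epsilon>. 0 < \<epsilon> \<and> \<epsilon> < \<epsilon>0 \<longrightarrow>
              (\<exists>q \<in> (Qset s \<eta> \<epsilon> :: (real^'m) set).
                 \<forall>p :: real^'m \<in> closure (Qset s \<eta> \<epsilon>). Xi s \<alpha> \<beta> U \<epsilon> q \<le> Xi s \<alpha> \<beta> U \<epsilon> p)"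
    proof (rule exI[of _ "min e0 1"], intro conjI allI impI)
      show "0 < min e0 1" using e0 by simp
      fix \<epsilon> :: real assume e: "0 < \<epsilon> \<and> \<epsilon> < min e0 1"
      have e1: "0 < \<epsilon>" "\<epsilon> < 1" using e by auto
      define l where "l = ell s \<epsilon>"
      have lR: "R/\<eta> + 1 \<le> l" using e0l[of \<epsilon>] e by (simp add: l_def)
      have l: "0 < l" using ell_pos[OF s e1] by (simp add: l_def)
      have \<eta>lR: "R \<le> \<eta> * l"
      proof -
        have "R/\<eta> \<le> l" using lR by simp
        then show ?thesis using \<eta>pos by (simp add: field_simps)
      qed
      have \<eta>1: "\<eta> < 1" using \<eta>half by simp
      define \<kappa> where "\<kappa> = l powr (-1-2 * s)"
      have \<kappa>: "0 < \<kappa>" using l by (simp add: \<kappa>_def)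
      define sh where "sh = shf s \<beta> \<epsilon>"
      define C :: "(real^'m) set" where
        "C = {q. \<forall>i. \<eta> * l \<le> q$i \<and> q$i \<le> l/\<eta>} \<inter> {q. \<forall>i j. i \<noteq> j \<longrightarrow> \<eta> * l \<le> \<bar>q$i - q$j\<bar>}"
      have QC: "Qset s \<eta> \<epsilon> \<subseteq> C"
        by (auto simp: Qset_def C_def l_def less_imp_le)
      have closedC: "closed C"
      proof -
        have c1': "{q::real^'m. \<forall>i. \<eta> * l \<le> q$i \<and> q$i \<le> l/\<eta>} = cbox (\<chi> i. \<eta> * l) (\<chi> i. l/\<eta>)"
          by (auto simp: mem_box_cart)
        have c2': "closed {q::real^'m. \<forall>i j. i \<noteq> j \<longrightarrow> \<eta> * l \<le> \<bar>q$i - q$j\<bar>}"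
        proof (intro closed_Collect_all)
          fix i j :: 'm
          show "closed {q::real^'m. i \<noteq> j \<longrightarrow> \<eta> * l \<le> \<bar>q$i - q$j\<bar>}"
          proof (cases "i = j")
            case True then show ?thesis by simp
          next
            case False then show ?thesis
              by (simp add: closed_Collect_le continuous_on_component continuous_intros)
          qed
        qed
        show ?thesis unfolding C_def c1' using c2' by (intro closed_Int) auto
      qed
      have compactC: "compact C"
      proof -
        have "C = cbox (\<chi> i. \<eta> * l) (\<chi> i. l/\<eta>) \<inter> C" by (auto simp: C_def mem_box_cart)
        moreover have "compact (cbox (\<chi> i. \<eta> * l) (\<chi> i. l/\<eta>) \<inter> C)"
          by (rule compact_Int_closed[OF compact_cbox closedC])
        ultimately show ?thesis by simp
      qed
      define q0 :: "real^'m" where "q0 = (\<chi> i. l * y0$i)"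
      have q0Q: "q0 \<in> Qset s \<eta> \<epsilon>"
      proof -
        have A1: "\<eta> * l < q0$i" for i
        proof -
          have "\<eta> * l < 1 * l" using \<eta>1 l by simp
          also have "\<dots> \<le> (1 + real (f i)) * l" using l by simp
          finally show ?thesis by (simp add: q0_def y0_def mult.commute)
        qed
        have A2: "q0$i < l/\<eta>" for i
        proof -
          have "1 + real (f i) \<le> real n" using fn[of i] by linarith
          also have "\<dots> < 1/\<eta>"
          proof -
            have "\<eta> * (real n + 2) < 1" using \<eta>n \<eta>pos by (simp add: field_simps)
            moreover have "\<eta> * real n \<le> \<eta> * (real n + 2)" using \<eta>pos by simp
            ultimately have "\<eta> * real n < 1" by linarith
            then show ?thesis using \<eta>pos by (simp add: field_simps)
          qed
          finally have "1 + real (f i) < 1/\<eta>" .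
          then have "l * (1 + real (f i)) < l * (1/\<eta>)" by (rule mult_strict_left_mono[OF _ l])
          then show ?thesis by (simp add: q0_def y0_def)
        qed
        have A3: "\<eta> * l < \<bar>q0$i - q0$j\<bar>" if "i \<noteq> j" for i j
        proof -
          have "1 \<le> \<bar>real (f i) - real (f j)\<bar>" using finj[OF that] by linarith
          then have "l * 1 \<le> l * \<bar>real (f i) - real (f j)\<bar>" using l by (intro mult_left_mono) auto
          moreover have "\<bar>q0$i - q0$j\<bar> = l * \<bar>real (f i) - real (f j)\<bar>"
            using l by (simp add: q0_def y0_def abs_mult flip: right_diff_distrib)
          moreover have "\<eta> * l < l" using \<eta>1 l by simp
          ultimately show ?thesis by linarith
        qed
        show ?thesis using A1 A2 A3 by (simp add: Qset_def l_def)
      qed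
      have q0C: "q0 \<in> C" using q0Q QC by blast
      have slotsC: "slots p (\<lambda>x. \<eta> * l \<le> \<bar>x\<bar>)" if "p \<in> C" for p
      proof -
        have h: "\<eta> * l \<le> p$i" for i using that by (simp add: C_def)
        have pos: "0 < \<eta> * l" using \<eta>pos l by simp
        have h1: "\<eta> * l \<le> \<bar>2 * p$i\<bar>" for i
        proof -
          have "\<bar>2 * p$i\<bar> = 2 * p$i" using h[of i] pos by simp
          then show ?thesis using h[of i] pos by linarith
        qed
        have h2: "\<eta> * l \<le> \<bar>p$i + p$j\<bar>" for i j
        proof -
          have "\<bar>p$i + p$j\<bar> = p$i + p$j" using h[of i] h[of j] pos by simp
          then show ?thesis using h[of i] h[of j] pos by linarith
        qed
        show ?thesis using that h1 h2 by (auto simp: slots_def C_def)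
      qed
      have contC: "continuous_on C (Xi s \<alpha> \<beta> U \<epsilon>)"
      proof (intro continuous_at_imp_continuous_on ballI)
        fix p assume "p \<in> C"
        have "0 < \<eta> * l" using \<eta>pos l by simp
        then have "slots p (\<lambda>x. x \<noteq> 0)"
          by (intro slots_mono[OF slotsC[OF \<open>p \<in> C\<close>]]) auto
        then show "isCont (Xi s \<alpha> \<beta> U \<epsilon>) p" by (rule Xi_isCont[OF _ Ucont])
      qed
      obtain pm where pmC: "pm \<in> C" and pmin: "\<And>p. p \<in> C \<Longrightarrow> Xi s \<alpha> \<beta> U \<epsilon> pm \<le> Xi s \<alpha> \<beta> U \<epsilon> p"
        using continuous_attains_inf[OF compactC _ contC] q0C by blast
      have closC: "closure (Qset s \<eta> \<epsilon>) \<subseteq> C" using QC closedC by (rule closure_minimal)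
      have pmQ: "pm \<in> Qset s \<eta> \<epsilon>"
      proof (rule ccontr)
        assume nQ: "pm \<notin> Qset s \<eta> \<epsilon>"
        have slotsR: "slots p (\<lambda>x. x \<noteq> 0 \<and> R \<le> \<bar>x\<bar>)" if "p \<in> C" for p
          using \<eta>lR R by (intro slots_mono[OF slotsC[OF that]]) auto
        define glo where "glo t = \<alpha>*b/2 * t powr (-1-2 * s) + \<beta> * Gf s t" for t
        have lowb: "Sm (\<lambda>x. sh + \<kappa> * glo (\<bar>x\<bar>/l)) pm \<le> Xi s \<alpha> \<beta> U \<epsilon> pm"
          unfolding Xi_Sm
        proof (rule Sm_mono, rule slots_mono[OF slotsR[OF pmC]])
          fix x :: real assume x: "x \<noteq> 0 \<and> R \<le> \<bar>x\<bar>"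
          show "sh + \<kappa> * glo (\<bar>x\<bar>/l) \<le> Xi_term s \<alpha> \<beta> U \<epsilon> x"
            using slot_bounds(1)[OF s e1 \<alpha>, of x b U \<beta>] x UR[of x]
            by (simp add: sh_def \<kappa>_def glo_def l_def)
        qed
        have upb: "Xi s \<alpha> \<beta> U \<epsilon> q0 \<le> Sm (\<lambda>x. sh + \<kappa> * ghi (\<bar>x\<bar>/l)) q0"
          unfolding Xi_Sm
        proof (rule Sm_mono, rule slots_mono[OF slotsR[OF q0C]])
          fix x :: real assume x: "x \<noteq> 0 \<and> R \<le> \<bar>x\<bar>"
          show "Xi_term s \<alpha> \<beta> U \<epsilon> x \<le> sh + \<kappa> * ghi (\<bar>x\<bar>/l)"
            using slot_bounds(2)[OF s e1 \<alpha>, of x b U \<beta>] x UR[of x]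
            by (simp add: sh_def \<kappa>_def ghi_def l_def)
        qed
        have eqlow: "Sm (\<lambda>x. sh + \<kappa> * glo (\<bar>x\<bar>/l)) pm
            = Sm (\<lambda>_. sh) pm + (\<kappa> * Sm (\<lambda>_. c1) pm + \<kappa> * Sm (\<lambda>x. \<phi> (\<bar>x\<bar>/l)) pm)"
        proof -
          have "(\<lambda>x. sh + \<kappa> * glo (\<bar>x\<bar>/l)) = (\<lambda>x. sh + (\<kappa> * c1 + \<kappa> * \<phi> (\<bar>x\<bar>/l)))"
            by (auto simp: glo_def \<phi>_def fun_eq_iff algebra_simps)
          then show ?thesis by (simp only: Sm_add Sm_cmult)
        qed
        have equp: "Sm (\<lambda>x. sh + \<kappa> * ghi (\<bar>x\<bar>/l)) q0 = Sm (\<lambda>_. sh) q0 + \<kappa> * A"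
          unfolding Sm_add Sm_cmult A_def q0_def using Sm_scale[OF l, of ghi y0] by simp
        have smallphi: "a/(8*\<eta>) \<le> \<phi> t" if t: "0 < t" "t \<le> 2*\<eta>" for t
        proof -
          have "1/(2*\<eta>) \<le> 1/t" using t by (simp add: frac_le)
          also have "\<dots> \<le> t powr (-1-2 * s)" using small_t[OF s(1) t(1)] t \<eta>half by simp
          finally have X: "1/(2*\<eta>) \<le> t powr (-1-2 * s)" .
          have "a/4 * (1/(2*\<eta>)) \<le> a/4 * t powr (-1-2 * s)" using X a by (intro mult_left_mono) auto
          moreover have "a/(8*\<eta>) = a/4 * (1/(2*\<eta>))" by simp
          ultimately show ?thesis using \<phi>1[OF t(1)] by linarith
        qed
        have largephi: "\<beta>*\<gamma>*ln (2/\<eta>) - c1 \<le> \<phi> t" if t: "2/\<eta> \<le> t" for t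
        proof -
          have "1 \<le> 2/\<eta>" using \<eta>1 \<eta>pos by (simp add: field_simps)
          then have t1: "1 \<le> t" using t by simp
          have "ln (2/\<eta>) \<le> ln t" using t t1 \<eta>pos by (subst ln_le_cancel_iff) auto
          then have "\<gamma> * ln (2/\<eta>) \<le> \<gamma> * ln t" using \<gamma> by simp
          also have "\<dots> \<le> Gf s t" using G_large[OF s t1] by (simp add: \<gamma>_def)
          finally have "\<beta> * (\<gamma> * ln (2/\<eta>)) \<le> \<beta> * Gf s t" using \<beta> by simp
          then show ?thesis using \<phi>2[of t] by (simp add: mult.assoc)
        qed
        have nonneg: "slots pm (\<lambda>x. 0 \<le> \<phi> (\<bar>x\<bar>/l))"
          using l by (intro slots_mono[OF slotsR[OF pmC]]) (auto intro!: \<phi>0)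
        have pmi: "\<eta> * l \<le> pm$i" "pm$i \<le> l/\<eta>" for i using pmC by (auto simp: C_def)
        have pmij: "\<eta> * l \<le> \<bar>pm$i - pm$j\<bar>" if "i \<noteq> j" for i j using pmC that by (auto simp: C_def)
        have \<eta>l: "0 < \<eta> * l" using \<eta>pos l by simp
        have special: "K < Sm (\<lambda>x. \<phi> (\<bar>x\<bar>/l)) pm"
        proof -
          from nQ consider i where "pm$i \<le> \<eta> * l" | i where "l/\<eta> \<le> pm$i"
            | i j where "i \<noteq> j" "\<bar>pm$i - pm$j\<bar> \<le> \<eta> * l"
            by (auto simp: Qset_def l_def not_less)
          then show ?thesis
          proof cases
            case (1 i)
            have tp: "0 < \<bar>2 * pm$i\<bar>/l" using pmi(1)[of i] \<eta>l l by simp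
            have tl: "\<bar>2 * pm$i\<bar>/l \<le> 2*\<eta>" using 1 pmi(1)[of i] \<eta>l l by (simp add: field_simps)
            show ?thesis using big1 smallphi[OF tp tl] Sm_single1[OF nonneg, of i] by simp
          next
            case (2 i)
            have ab: "\<bar>2 * pm$i\<bar> = 2 * pm$i" using pmi(1)[of i] \<eta>l by simp
            have "2*(l/\<eta>)/l \<le> 2*pm$i/l" using 2 l by (intro divide_right_mono) auto
            moreover have "2*(l/\<eta>)/l = 2/\<eta>" using l by simp
            ultimately have tl: "2/\<eta> \<le> \<bar>2 * pm$i\<bar>/l" using ab by simp
            show ?thesis using big2 largephi[OF tl] Sm_single1[OF nonneg, of i] by simp
          next
            case (3 i j)
            have tp: "0 < \<bar>pm$i - pm$j\<bar>/l" using pmij[OF 3(1)] \<eta>l l by simp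
            have tl: "\<bar>pm$i - pm$j\<bar>/l \<le> 2*\<eta>" using 3 \<eta>pos l by (simp add: field_simps)
            show ?thesis using big1 smallphi[OF tp tl] Sm_single2[OF nonneg 3(1)] by simp
          qed
        qed
        have c1eq: "Sm (\<lambda>_. c1) pm = Sm (\<lambda>_. c1) y0" by (rule Sm_const)
        have sheq: "Sm (\<lambda>_. sh) pm = Sm (\<lambda>_. sh) q0" by (rule Sm_const)
        have "Xi s \<alpha> \<beta> U \<epsilon> q0 \<le> Sm (\<lambda>_. sh) q0 + \<kappa> * A" using upb equp by simp
        also have "\<dots> = Sm (\<lambda>_. sh) pm + (\<kappa> * Sm (\<lambda>_. c1) pm + \<kappa> * K)"
          using sheq c1eq by (simp add: K_def algebra_simps)
        also have "\<dots> < Sm (\<lambda>_. sh) pm + (\<kappa> * Sm (\<lambda>_. c1) pm + \<kappa> * Sm (\<lambda>x. \<phi> (\<bar>x\<bar>/l)) pm)"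
          using special \<kappa> by simp
        also have "\<dots> \<le> Xi s \<alpha> \<beta> U \<epsilon> pm" using lowb eqlow by simp
        finally have X: "Xi s \<alpha> \<beta> U \<epsilon> q0 < Xi s \<alpha> \<beta> U \<epsilon> pm" .
        then show False using pmin[OF q0C] by simp
      qed
      show "\<exists>q \<in> (Qset s \<eta> \<epsilon> :: (real^'m) set).
                 \<forall>p :: real^'m \<in> closure (Qset s \<eta> \<epsilon>). Xi s \<alpha> \<beta> U \<epsilon> q \<le> Xi s \<alpha> \<beta> U \<epsilon> p"
        using pmQ pmin closC by blast
    qed
  qed
qed

end
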